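(* Let $(G,\cdot)$ be a group satisfying the descending chain condition on subgroups and the ascending chain condition on normal subgroups (e.g. $G$ finite). Let $\epsilon\in\{1,-1\}$ and $\psi\in\operatorname{End}(G,\cdot)$ with either $\epsilon=-1$ and $\psi([[G,\psi],G])\le Z(G,\cdot)$, or $\epsilon=1$ and $\psi([\psi(G),G])\le Z(G,\cdot)$. Let $g\circ h=g\cdot\psi(g)^{\epsilon}\cdot h\cdot\psi(g)^{-\epsilon}$, let $\nu(g)\in\operatorname{Perm}(G)$ be $h\mapsto g\circ h$, and $N=\{\nu(g):g\in G\}$. Then there is a natural number $n$ such that: (1) $J=\ker(\psi^n)$ is a normal subgroup of both $(G,\cdot)$ and $(G,\circ)$; (2) $I=\psi^n(G)$ is a subgroup of both $(G,\cdot)$ and $(G,\circ)$; (3) $\psi$ restricts to a nilpotent endomorphism of $J$; (4) $\psi$ restricts to an automorphism of $I$; (5) both $(G,\cdot)$ and $(G,\circ)$ are semidirect products of $J$ by $I$; (6) $N$ is the semidirect product of its normal subgroup $\nu(J)$ by $\nu(I)$.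
   Context: $\operatorname{Perm}(G)$ is the group of permutations of the set $G$. For $\psi\in\operatorname{End}(G,\cdot)$, $[g,\psi]=g\cdot\psi(g)^{-1}$ and $[G,\psi]$ is the subgroup generated by these elements. Commutators are $[x,y]=xyx^{-1}y^{-1}$ and $[A,B]$ is the subgroup generated by $[a,b]$, $a\in A$, $b\in B$. $Z(G,\cdot)$ is the centre. $\psi^n$ is the $n$-fold composite of $\psi$; an endomorphism is nilpotent if some power of it is trivial. *)

theory Defs
  imports "HOL-Algebra.Algebra"
begin

definition grp_center :: "('a, 'b) monoid_scheme \<Rightarrow> 'a set" where
  "grp_center G = {z \<in> carrier G. \<forall>x \<in> carrier G. z \<otimes>\<^bsub>G\<^esub> x = x \<otimes>\<^bsub>G\<^esub> z}"

definition comm_subgroup :: "('a, 'b) monoid_scheme \<Rightarrow> 'a set \<Rightarrow> 'a set \<Rightarrow> 'a set" where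
  "comm_subgroup G A B = generate G
     {x \<otimes>\<^bsub>G\<^esub> y \<otimes>\<^bsub>G\<^esub> inv\<^bsub>G\<^esub> x \<otimes>\<^bsub>G\<^esub> inv\<^bsub>G\<^esub> y | x y. x \<in> A \<and> y \<in> B}"

definition psi_comm :: "('a, 'b) monoid_scheme \<Rightarrow> ('a \<Rightarrow> 'a) \<Rightarrow> 'a set" where
  "psi_comm G \<psi> = generate G {g \<otimes>\<^bsub>G\<^esub> inv\<^bsub>G\<^esub> (\<psi> g) | g. g \<in> carrier G}"

definition dcc_subgroups :: "('a, 'b) monoid_scheme \<Rightarrow> bool" where
  "dcc_subgroups G \<longleftrightarrow> (\<forall>f :: nat \<Rightarrow> 'a set.
     (\<forall>i. subgroup (f i) G) \<and> (\<forall>i. f (Suc i) \<subseteq> f i) \<longrightarrow> (\<exists>m. \<forall>k\<ge>m. f k = f m))"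

definition acc_normal_subgroups :: "('a, 'b) monoid_scheme \<Rightarrow> bool" where
  "acc_normal_subgroups G \<longleftrightarrow> (\<forall>f :: nat \<Rightarrow> 'a set.
     (\<forall>i. f i \<lhd> G) \<and> (\<forall>i. f i \<subseteq> f (Suc i)) \<longrightarrow> (\<exists>m. \<forall>k\<ge>m. f k = f m))"

definition circ_op :: "('a, 'b) monoid_scheme \<Rightarrow> ('a \<Rightarrow> 'a) \<Rightarrow> int \<Rightarrow> 'a \<Rightarrow> 'a \<Rightarrow> 'a" where
  "circ_op G \<psi> \<epsilon> g h = g \<otimes>\<^bsub>G\<^esub> (\<psi> g [^]\<^bsub>G\<^esub> \<epsilon>) \<otimes>\<^bsub>G\<^esub> h \<otimes>\<^bsub>G\<^esub> (\<psi> g [^]\<^bsub>G\<^esub> (- \<epsilon>))"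

definition circ_group :: "('a, 'b) monoid_scheme \<Rightarrow> ('a \<Rightarrow> 'a) \<Rightarrow> int \<Rightarrow> 'a monoid" where
  "circ_group G \<psi> \<epsilon> = \<lparr>carrier = carrier G, monoid.mult = circ_op G \<psi> \<epsilon>, one = \<one>\<^bsub>G\<^esub>\<rparr>"

definition nu :: "('a, 'b) monoid_scheme \<Rightarrow> ('a \<Rightarrow> 'a) \<Rightarrow> int \<Rightarrow> 'a \<Rightarrow> ('a \<Rightarrow> 'a)" where
  "nu G \<psi> \<epsilon> g = (\<lambda>h \<in> carrier G. circ_op G \<psi> \<epsilon> g h)"

definition nu_group :: "('a, 'b) monoid_scheme \<Rightarrow> ('a \<Rightarrow> 'a) \<Rightarrow> int \<Rightarrow> ('a \<Rightarrow> 'a) monoid" where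
  "nu_group G \<psi> \<epsilon> = (BijGroup (carrier G))\<lparr>carrier := nu G \<psi> \<epsilon> ` carrier G\<rparr>"

definition semidirect_of :: "('a, 'b) monoid_scheme \<Rightarrow> 'a set \<Rightarrow> 'a set \<Rightarrow> bool" where
  "semidirect_of H J I \<longleftrightarrow> J \<lhd> H \<and> subgroup I H \<and> J \<inter> I = {\<one>\<^bsub>H\<^esub>} \<and> J <#>\<^bsub>H\<^esub> I = carrier H"

end

theory Submission
  imports Defs
begin

lemma semidirect_transfer:
  assumes A: "group A" and B: "group B" and f: "f \<in> hom A B"
    and bij: "bij_betw f (carrier A) (carrier B)" and sd: "semidirect_of A J I"
  shows "semidirect_of B (f ` J) (f ` I)"
proof -
  interpret gh: group_hom A B f using A B f by (simp add: group_hom_def group_hom_axioms_def)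
  have Jn: "J \<lhd> A" and Is: "subgroup I A" and JI: "J \<inter> I = {\<one>\<^bsub>A\<^esub>}"
    and JIc: "J <#>\<^bsub>A\<^esub> I = carrier A" using sd by (auto simp: semidirect_of_def)
  have Js: "subgroup J A" using Jn by (simp add: normal_imp_subgroup)
  have Jc: "J \<subseteq> carrier A" and Ic: "I \<subseteq> carrier A" using Js Is by (auto dest: subgroup.subset)
  have inj: "inj_on f (carrier A)" and surj: "f ` carrier A = carrier B" using bij by (auto simp: bij_betw_def)
  have "f ` J \<lhd> B"
    unfolding group.normal_inv_iff[OF B]
  proof (intro conjI ballI)
    show "subgroup (f ` J) B" using gh.subgroup_img_is_subgroup[OF Js] .
    fix x h assume x: "x \<in> carrier B" and h: "h \<in> f ` J"
    obtain a where a: "a \<in> carrier A" "x = f a" using x surj by auto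
    obtain j where j: "j \<in> J" "h = f j" using h by auto
    have jA: "j \<in> carrier A" using j Jc by auto
    have "a \<otimes>\<^bsub>A\<^esub> j \<otimes>\<^bsub>A\<^esub> inv\<^bsub>A\<^esub> a \<in> J"
      using Jn a j unfolding group.normal_inv_iff[OF A] by auto
    moreover have "f (a \<otimes>\<^bsub>A\<^esub> j \<otimes>\<^bsub>A\<^esub> inv\<^bsub>A\<^esub> a) = x \<otimes>\<^bsub>B\<^esub> h \<otimes>\<^bsub>B\<^esub> inv\<^bsub>B\<^esub> x"
      using a j jA by simp
    ultimately show "x \<otimes>\<^bsub>B\<^esub> h \<otimes>\<^bsub>B\<^esub> inv\<^bsub>B\<^esub> x \<in> f ` J" by (metis image_eqI)
  qed
  moreover have "subgroup (f ` I) B" using gh.subgroup_img_is_subgroup[OF Is] .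
  moreover have "f ` J \<inter> f ` I = {\<one>\<^bsub>B\<^esub>}"
  proof -
    have "f ` J \<inter> f ` I = f ` (J \<inter> I)"
      using inj Jc Ic by (simp add: inj_on_image_Int)
    then show ?thesis using JI by simp
  qed
  moreover have "f ` J <#>\<^bsub>B\<^esub> f ` I = carrier B"
  proof -
    have "f ` J <#>\<^bsub>B\<^esub> f ` I = f ` (J <#>\<^bsub>A\<^esub> I)"
      unfolding set_mult_def using Jc Ic by (auto simp: gh.hom_mult[symmetric] simp del: gh.hom_mult) (force+)
    then show ?thesis using JIc surj by simp
  qed
  ultimately show ?thesis by (simp add: semidirect_of_def)
qed

locale psi_setup = group G for G :: "('a, 'b) monoid_scheme" (structure) +
  fixes \<psi> :: "'a \<Rightarrow> 'a" and \<epsilon> :: int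
  assumes hom: "\<psi> \<in> hom G G"
  and cond: "(\<epsilon> = -1 \<and> \<psi> ` comm_subgroup G (psi_comm G \<psi>) (carrier G) \<subseteq> grp_center G)
       \<or> (\<epsilon> = 1 \<and> \<psi> ` comm_subgroup G (\<psi> ` carrier G) (carrier G) \<subseteq> grp_center G)"
begin

lemma ghom: "group_hom G G \<psi>"
  by (simp add: group_hom_def group_hom_axioms_def hom group_axioms)

lemma psi_closed[simp]: "x \<in> carrier G \<Longrightarrow> \<psi> x \<in> carrier G"
  using hom by (simp add: hom_in_carrier)
lemma psi_mult[simp]: "x \<in> carrier G \<Longrightarrow> y \<in> carrier G \<Longrightarrow> \<psi> (x \<otimes> y) = \<psi> x \<otimes> \<psi> y"
  using group_hom.hom_mult[OF ghom] by simp
lemma psi_inv[simp]: "x \<in> carrier G \<Longrightarrow> \<psi> (inv x) = inv (\<psi> x)"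
  using group_hom.hom_inv[OF ghom] by simp
lemma psi_one[simp]: "\<psi> \<one> = \<one>"
  using group_hom.hom_one[OF ghom] by simp

lemma canc1[simp]: "x \<in> carrier G \<Longrightarrow> y \<in> carrier G \<Longrightarrow> x \<otimes> (inv x \<otimes> y) = y"
  by (simp flip: m_assoc)
lemma canc2[simp]: "x \<in> carrier G \<Longrightarrow> y \<in> carrier G \<Longrightarrow> inv x \<otimes> (x \<otimes> y) = y"
  by (simp flip: m_assoc)

definition E where "E g = \<psi> g [^] \<epsilon>"

lemma eps: "\<epsilon> = 1 \<or> \<epsilon> = -1" using cond by auto

lemma E_closed[simp]: "g \<in> carrier G \<Longrightarrow> E g \<in> carrier G"
  by (simp add: E_def)

lemma E_1: "\<epsilon> = 1 \<Longrightarrow> g \<in> carrier G \<Longrightarrow> E g = \<psi> g" unfolding E_def by (simp add: int_pow_1)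
lemma E_m1: "\<epsilon> = -1 \<Longrightarrow> g \<in> carrier G \<Longrightarrow> E g = inv \<psi> g"
  unfolding E_def by (simp add: int_pow_neg)

lemma circ_eq: "g \<in> carrier G \<Longrightarrow> circ_op G \<psi> \<epsilon> g h = g \<otimes> E g \<otimes> h \<otimes> inv (E g)"
  by (simp add: circ_op_def E_def int_pow_neg)

lemma E_psi: "g \<in> carrier G \<Longrightarrow> \<psi> (E g) = E (\<psi> g)"
  by (simp add: E_def group_hom.hom_int_pow[OF ghom])

lemma E_one[simp]: "E \<one> = \<one>" by (simp add: E_def)

lemma central:
  assumes g: "g \<in> carrier G" and h: "h \<in> carrier G"
  shows "inv (circ_op G \<psi> \<epsilon> g h \<otimes> E (circ_op G \<psi> \<epsilon> g h)) \<otimes> (g \<otimes> E g \<otimes> h \<otimes> E h) \<in> grp_center G"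
  using eps
proof
  assume e1: "\<epsilon> = 1"
  then have Z: "\<psi> ` comm_subgroup G (\<psi> ` carrier G) (carrier G) \<subseteq> grp_center G" using cond by auto
  define c where "c = \<psi> g \<otimes> inv h \<otimes> inv (\<psi> g) \<otimes> inv (inv h)"
  have "c \<in> comm_subgroup G (\<psi> ` carrier G) (carrier G)"
    unfolding comm_subgroup_def c_def using g h by (intro generate.incl) blast
  then have "\<psi> c \<in> grp_center G" using Z by blast
  moreover have "inv (circ_op G \<psi> \<epsilon> g h \<otimes> E (circ_op G \<psi> \<epsilon> g h)) \<otimes> (g \<otimes> E g \<otimes> h \<otimes> E h) = \<psi> c"
    using g h by (simp add: circ_eq E_1[OF e1] c_def m_assoc inv_mult_group)
  ultimately show ?thesis by simp
next
  assume e1: "\<epsilon> = -1"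
  then have Z: "\<psi> ` comm_subgroup G (psi_comm G \<psi>) (carrier G) \<subseteq> grp_center G" using cond by auto
  define u where "u = g \<otimes> inv (\<psi> g)"
  have u: "u \<in> psi_comm G \<psi>" unfolding psi_comm_def u_def using g by (intro generate.incl) blast
  define c where "c = u \<otimes> h \<otimes> inv u \<otimes> inv h"
  have "c \<in> comm_subgroup G (psi_comm G \<psi>) (carrier G)"
    unfolding comm_subgroup_def c_def using u h by (intro generate.incl) blast
  then have "\<psi> c \<in> grp_center G" using Z by blast
  moreover have "inv (circ_op G \<psi> \<epsilon> g h \<otimes> E (circ_op G \<psi> \<epsilon> g h)) \<otimes> (g \<otimes> E g \<otimes> h \<otimes> E h) = \<psi> c"
    using g h by (simp add: circ_eq E_m1[OF e1] c_def u_def m_assoc inv_mult_group)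
  ultimately show ?thesis by simp
qed

abbreviation "C \<equiv> circ_group G \<psi> \<epsilon>"
abbreviation circ (infixl "\<circ>\<circ>" 70) where "circ \<equiv> circ_op G \<psi> \<epsilon>"

lemma C_carrier[simp]: "carrier C = carrier G" by (simp add: circ_group_def)
lemma C_one[simp]: "\<one>\<^bsub>C\<^esub> = \<one>" by (simp add: circ_group_def)
lemma C_mult[simp]: "x \<otimes>\<^bsub>C\<^esub> y = x \<circ>\<circ> y" by (simp add: circ_group_def)

lemma circ_closed[simp]: "x \<in> carrier G \<Longrightarrow> y \<in> carrier G \<Longrightarrow> x \<circ>\<circ> y \<in> carrier G"
  by (simp add: circ_eq)

lemma circ_assoc:
  assumes g: "g \<in> carrier G" and h: "h \<in> carrier G" and k: "k \<in> carrier G"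
  shows "(g \<circ>\<circ> h) \<circ>\<circ> k = g \<circ>\<circ> (h \<circ>\<circ> k)"
proof -
  define x where "x = g \<circ>\<circ> h"
  define a where "a = g \<otimes> E g \<otimes> h \<otimes> E h"
  define b where "b = x \<otimes> E x"
  define z where "z = inv b \<otimes> a"
  have x: "x \<in> carrier G" using g h by (simp add: x_def)
  have a: "a \<in> carrier G" using g h by (simp add: a_def)
  have b: "b \<in> carrier G" using x by (simp add: b_def)
  have zc: "z \<in> grp_center G" using central[OF g h] by (simp add: z_def x_def a_def b_def)
  then have z: "z \<in> carrier G" and zk: "z \<otimes> k = k \<otimes> z" using k by (auto simp: grp_center_def)
  have az: "a = b \<otimes> z" using a b by (simp add: z_def)
  have "x \<circ>\<circ> k = b \<otimes> k \<otimes> inv b \<otimes> x"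
    using x k by (simp add: circ_eq b_def m_assoc inv_mult_group)
  also have "\<dots> = b \<otimes> (z \<otimes> k) \<otimes> inv z \<otimes> inv b \<otimes> x"
    using zk b z k x by (simp add: m_assoc)
  also have "\<dots> = a \<otimes> k \<otimes> inv a \<otimes> x"
    using az b z k x by (simp add: m_assoc inv_mult_group)
  also have "\<dots> = g \<circ>\<circ> (h \<circ>\<circ> k)"
    using g h k by (simp add: circ_eq a_def x_def m_assoc inv_mult_group)
  finally show ?thesis by (simp add: x_def)
qed

lemma circ_lone[simp]: "x \<in> carrier G \<Longrightarrow> \<one> \<circ>\<circ> x = x"
  by (simp add: circ_eq)
lemma circ_rone[simp]: "x \<in> carrier G \<Longrightarrow> x \<circ>\<circ> \<one> = x"
  by (simp add: circ_eq m_assoc)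

definition cinv where "cinv g = inv (E g) \<otimes> inv g \<otimes> E g"

lemma cinv_closed[simp]: "g \<in> carrier G \<Longrightarrow> cinv g \<in> carrier G"
  by (simp add: cinv_def)
lemma circ_rinv[simp]: "g \<in> carrier G \<Longrightarrow> g \<circ>\<circ> cinv g = \<one>"
  by (simp add: circ_eq cinv_def m_assoc)
lemma circ_linv[simp]: assumes g: "g \<in> carrier G" shows "cinv g \<circ>\<circ> g = \<one>"
proof -
  have c1: "cinv g \<in> carrier G" and c2: "cinv (cinv g) \<in> carrier G" using g by auto
  have "cinv g \<circ>\<circ> g = (cinv g \<circ>\<circ> g) \<circ>\<circ> (cinv g \<circ>\<circ> cinv (cinv g))"
    using g c1 circ_rinv[OF c1] by simp
  also have "\<dots> = cinv g \<circ>\<circ> ((g \<circ>\<circ> cinv g) \<circ>\<circ> cinv (cinv g))"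
    using g c1 c2 by (simp add: circ_assoc del: circ_rinv)
  also have "\<dots> = \<one>" using g c1 c2 circ_rinv[OF g] circ_rinv[OF c1] circ_lone[OF c2] by simp
  finally show ?thesis .
qed

lemma group_C: "group C"
proof (rule groupI)
  fix x assume "x \<in> carrier C"
  then show "\<exists>y\<in>carrier C. y \<otimes>\<^bsub>C\<^esub> x = \<one>\<^bsub>C\<^esub>" by (intro bexI[of _ "cinv x"]) auto
qed (auto simp: circ_assoc)

lemma psi_circ: "x \<in> carrier G \<Longrightarrow> y \<in> carrier G \<Longrightarrow> \<psi> (x \<circ>\<circ> y) = \<psi> x \<circ>\<circ> \<psi> y"
  by (simp add: circ_eq E_psi)

lemma hom_C: "\<psi> \<in> hom C C"
  by (rule homI) (auto simp: psi_circ)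

lemma pow_hom: "(\<psi> ^^ n) \<in> hom G G"
proof (induction n)
  case (Suc n) then show ?case using Group.hom_compose[OF Suc hom] by (simp add: comp_def)
qed (auto intro: homI)

lemma pow_hom_C: "(\<psi> ^^ n) \<in> hom C C"
proof (induction n)
  case (Suc n) then show ?case using Group.hom_compose[OF Suc hom_C] by (simp add: comp_def)
qed (auto intro: homI)

abbreviation "\<nu> \<equiv> nu G \<psi> \<epsilon>"
abbreviation "NG \<equiv> nu_group G \<psi> \<epsilon>"

lemma nu_Bij: assumes g: "g \<in> carrier G" shows "\<nu> g \<in> Bij (carrier G)"
proof -
  have "bij_betw (\<nu> g) (carrier G) (carrier G)"
  proof (rule bij_betw_byWitness[where f'="\<nu> (cinv g)"])
    show "\<forall>a\<in>carrier G. \<nu> (cinv g) (\<nu> g a) = a"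
      using g by (simp add: nu_def flip: circ_assoc)
    show "\<forall>a\<in>carrier G. \<nu> g (\<nu> (cinv g) a) = a"
      using g by (simp add: nu_def flip: circ_assoc)
  qed (use g in \<open>auto simp: nu_def\<close>)
  then show ?thesis by (simp add: Bij_def nu_def)
qed

lemma nu_mult: assumes a: "a \<in> carrier G" and b: "b \<in> carrier G"
  shows "\<nu> a \<otimes>\<^bsub>BijGroup (carrier G)\<^esub> \<nu> b = \<nu> (a \<circ>\<circ> b)"
  using a b nu_Bij[OF a] nu_Bij[OF b]
  by (auto simp: BijGroup_def compose_def nu_def circ_assoc intro!: ext)

lemma nu_one: "\<nu> \<one> = \<one>\<^bsub>BijGroup (carrier G)\<^esub>"
  by (auto simp: BijGroup_def nu_def intro!: ext)

lemma nu_sub: "subgroup (\<nu> ` carrier G) (BijGroup (carrier G))"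
proof (rule group.subgroupI[OF group_BijGroup])
  show "\<nu> ` carrier G \<subseteq> carrier (BijGroup (carrier G))"
    using nu_Bij by (auto simp: BijGroup_def)
  show "\<nu> ` carrier G \<noteq> {}" by auto
  fix a assume "a \<in> \<nu> ` carrier G"
  then obtain g where g: "g \<in> carrier G" "a = \<nu> g" by auto
  have "inv\<^bsub>BijGroup (carrier G)\<^esub> (\<nu> g) = \<nu> (cinv g)"
  proof (rule group.inv_equality[OF group_BijGroup])
    show "\<nu> (cinv g) \<otimes>\<^bsub>BijGroup (carrier G)\<^esub> \<nu> g = \<one>\<^bsub>BijGroup (carrier G)\<^esub>"
      using g by (simp add: nu_mult nu_one)
  qed (use g nu_Bij[of g] nu_Bij[of "cinv g"] in \<open>auto simp: BijGroup_def\<close>)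
  then show "inv\<^bsub>BijGroup (carrier G)\<^esub> a \<in> \<nu> ` carrier G" using g by auto
next
  fix a b assume "a \<in> \<nu> ` carrier G" "b \<in> \<nu> ` carrier G"
  then show "a \<otimes>\<^bsub>BijGroup (carrier G)\<^esub> b \<in> \<nu> ` carrier G"
    by (auto simp: nu_mult)
qed

lemma group_NG: "group NG"
  unfolding nu_group_def using subgroup.subgroup_is_group[OF nu_sub group_BijGroup] .

lemma hom_nu: "\<nu> \<in> hom C NG"
  by (rule homI) (auto simp: nu_group_def nu_mult[symmetric])

lemma bij_nu: "bij_betw \<nu> (carrier C) (carrier NG)"
proof -
  have "inj_on \<nu> (carrier G)"
  proof (rule inj_onI)
    fix a b assume a: "a \<in> carrier G" and b: "b \<in> carrier G" and e: "\<nu> a = \<nu> b"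
    have "\<nu> a \<one> = \<nu> b \<one>" using e by simp
    then show "a = b" using a b by (simp add: nu_def)
  qed
  then show ?thesis by (simp add: bij_betw_def nu_group_def)
qed

lemma fitting:
  assumes dcc: "dcc_subgroups G" and acc: "acc_normal_subgroups G"
  obtains n where "(\<psi>^^(Suc n)) ` carrier G = (\<psi>^^n) ` carrier G"
    "(\<psi>^^(n+n)) ` carrier G = (\<psi>^^n) ` carrier G"
    "kernel G G (\<psi>^^(Suc n)) = kernel G G (\<psi>^^n)"
    "kernel G G (\<psi>^^(n+n)) = kernel G G (\<psi>^^n)"
proof -
  define If where "If i = (\<psi>^^i) ` carrier G" for i
  define Kf where "Kf i = kernel G G (\<psi>^^i)" for i
  have gh: "group_hom G G (\<psi>^^i)" for i
    by (simp add: group_hom_def group_hom_axioms_def pow_hom group_axioms)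
  have "\<forall>i. subgroup (If i) G" using gh by (simp add: If_def group_hom.img_is_subgroup)
  moreover have "\<forall>i. If (Suc i) \<subseteq> If i"
  proof
    fix i
    have "If (Suc i) = (\<psi>^^i) ` (\<psi> ` carrier G)"
      by (simp add: If_def image_comp funpow_swap1)
    also have "\<dots> \<subseteq> If i" unfolding If_def by (intro image_mono) auto
    finally show "If (Suc i) \<subseteq> If i" .
  qed
  ultimately obtain m1 where m1: "\<forall>k\<ge>m1. If k = If m1"
    using dcc unfolding dcc_subgroups_def by blast
  have "\<forall>i. Kf i \<lhd> G" using gh by (simp add: Kf_def group_hom.normal_kernel)
  moreover have "\<forall>i. Kf i \<subseteq> Kf (Suc i)"
    by (auto simp: Kf_def kernel_def)
  ultimately obtain m2 where m2: "\<forall>k\<ge>m2. Kf k = Kf m2"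
    using acc unfolding acc_normal_subgroups_def by blast
  define n where "n = m1 + m2"
  have "If (Suc n) = If n" "If (n+n) = If n" "Kf (Suc n) = Kf n" "Kf (n+n) = Kf n"
    using m1 m2 unfolding n_def by (metis le_add1 le_add2 le_SucI add_increasing2 le0 trans_le_add1)+
  then show ?thesis using that by (simp add: If_def Kf_def)
qed

theorem main_loc:
  assumes dcc: "dcc_subgroups G" and acc: "acc_normal_subgroups G"
  shows "\<exists>n::nat.
    (let J = kernel G G (\<psi> ^^ n); I = (\<psi> ^^ n) ` carrier G; C = circ_group G \<psi> \<epsilon> in
      J \<lhd> G \<and> J \<lhd> C
    \<and> subgroup I G \<and> subgroup I C
    \<and> \<psi> \<in> hom (G\<lparr>carrier := J\<rparr>) (G\<lparr>carrier := J\<rparr>) \<and> (\<exists>m. \<forall>x\<in>J. (\<psi> ^^ m) x = \<one>\<^bsub>G\<^esub>)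
    \<and> \<psi> \<in> iso (G\<lparr>carrier := I\<rparr>) (G\<lparr>carrier := I\<rparr>)
    \<and> semidirect_of G J I \<and> semidirect_of C J I
    \<and> semidirect_of (nu_group G \<psi> \<epsilon>) (nu G \<psi> \<epsilon> ` J) (nu G \<psi> \<epsilon> ` I))"
proof -
  obtain n where i1: "(\<psi>^^(Suc n)) ` carrier G = (\<psi>^^n) ` carrier G"
    and i2: "(\<psi>^^(n+n)) ` carrier G = (\<psi>^^n) ` carrier G"
    and k1: "kernel G G (\<psi>^^(Suc n)) = kernel G G (\<psi>^^n)"
    and k2: "kernel G G (\<psi>^^(n+n)) = kernel G G (\<psi>^^n)"
    using fitting[OF dcc acc] by blast
  define J where "J = kernel G G (\<psi> ^^ n)"
  define I where "I = (\<psi> ^^ n) ` carrier G"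
  have gh: "group_hom G G (\<psi>^^n)"
    by (simp add: group_hom_def group_hom_axioms_def pow_hom group_axioms)
  have ghC: "group_hom C C (\<psi>^^n)"
    by (simp add: group_hom_def group_hom_axioms_def pow_hom_C group_C)
  have kC: "kernel C C (\<psi>^^n) = J" by (simp add: kernel_def J_def)
  have JG: "J \<lhd> G" unfolding J_def using group_hom.normal_kernel[OF gh] .
  have JC: "J \<lhd> C" using group_hom.normal_kernel[OF ghC] kC by simp
  have IG: "subgroup I G" unfolding I_def using group_hom.img_is_subgroup[OF gh] .
  have IC: "subgroup I C" unfolding I_def using group_hom.img_is_subgroup[OF ghC] by simp
  have Jc: "J \<subseteq> carrier G" and Ic: "I \<subseteq> carrier G" by (auto simp: J_def I_def kernel_def intro: hom_in_carrier[OF pow_hom])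
  have memJ: "x \<in> J \<longleftrightarrow> x \<in> carrier G \<and> (\<psi>^^n) x = \<one>" for x
    by (simp add: J_def kernel_def)
  have powc: "x \<in> carrier G \<Longrightarrow> (\<psi>^^k) x \<in> carrier G" for x k
    using pow_hom[of k] by (simp add: hom_in_carrier)
  have P5: "\<psi> \<in> hom (G\<lparr>carrier := J\<rparr>) (G\<lparr>carrier := J\<rparr>)"
  proof (rule homI)
    fix x assume "x \<in> carrier (G\<lparr>carrier := J\<rparr>)"
    then have x: "x \<in> J" by simp
    then show "\<psi> x \<in> carrier (G\<lparr>carrier := J\<rparr>)"
      using memJ[of x] memJ[of "\<psi> x"] by (simp add: funpow_swap1[symmetric])
  next
    fix x y assume "x \<in> carrier (G\<lparr>carrier := J\<rparr>)" "y \<in> carrier (G\<lparr>carrier := J\<rparr>)"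
    then show "\<psi> (x \<otimes>\<^bsub>G\<lparr>carrier := J\<rparr>\<^esub> y) = \<psi> x \<otimes>\<^bsub>G\<lparr>carrier := J\<rparr>\<^esub> \<psi> y"
      using Jc by (auto intro!: psi_mult)
  qed
  have P6: "\<exists>m. \<forall>x\<in>J. (\<psi> ^^ m) x = \<one>" using memJ by blast
  have psiI: "\<psi> ` I = I"
    using i1 by (simp add: I_def image_comp)
  have injI: "inj_on \<psi> I"
  proof (rule inj_onI)
    fix a b assume a: "a \<in> I" and b: "b \<in> I" and e: "\<psi> a = \<psi> b"
    have ac: "a \<in> carrier G" "b \<in> carrier G" using a b Ic by auto
    have "a \<otimes> inv b \<in> I" using a b IG by (simp add: subgroup.m_closed subgroup.m_inv_closed)
    then obtain w where w: "w \<in> carrier G" "a \<otimes> inv b = (\<psi>^^n) w" by (auto simp: I_def)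
    have "(\<psi>^^Suc n) w = \<psi> (a \<otimes> inv b)" using w by simp
    also have "\<dots> = \<one>" using ac e by simp
    finally have "w \<in> kernel G G (\<psi>^^(Suc n))" using w by (simp add: kernel_def)
    then have "w \<in> kernel G G (\<psi>^^n)" using k1 by simp
    then have "(\<psi>^^n) w = \<one>" by (simp add: kernel_def)
    then have "a \<otimes> inv b = \<one>" using w by simp
    then show "a = b" using ac by (metis inv_equality inv_inv inv_closed)
  qed
  have P7: "\<psi> \<in> iso (G\<lparr>carrier := I\<rparr>) (G\<lparr>carrier := I\<rparr>)"
    unfolding iso_def
  proof (intro CollectI conjI)
    show "\<psi> \<in> hom (G\<lparr>carrier := I\<rparr>) (G\<lparr>carrier := I\<rparr>)"
      by (rule homI) (use psiI Ic in \<open>auto intro!: psi_mult\<close>)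
    show "bij_betw \<psi> (carrier (G\<lparr>carrier := I\<rparr>)) (carrier (G\<lparr>carrier := I\<rparr>))"
      using injI psiI by (simp add: bij_betw_def)
  qed
  have JI: "J \<inter> I = {\<one>}"
  proof
    show "{\<one>} \<subseteq> J \<inter> I" using JG IG by (auto dest: normal_imp_subgroup subgroup.one_closed)
    show "J \<inter> I \<subseteq> {\<one>}"
    proof
      fix x assume "x \<in> J \<inter> I"
      then obtain g where g: "g \<in> carrier G" "x = (\<psi>^^n) g" and "(\<psi>^^n) x = \<one>"
        by (auto simp: I_def memJ)
      then have "(\<psi>^^(n+n)) g = \<one>" by (simp add: funpow_add)
      then have "g \<in> kernel G G (\<psi>^^(n+n))" using g by (simp add: kernel_def)
      then have "g \<in> kernel G G (\<psi>^^n)" using k2 by simp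
      then show "x \<in> {\<one>}" using g by (simp add: kernel_def)
    qed
  qed
  have decomp: "\<exists>j\<in>J. \<exists>i\<in>I. g = j \<otimes> i" if g: "g \<in> carrier G" for g
  proof -
    have "(\<psi>^^n) g \<in> (\<psi>^^(n+n)) ` carrier G" using i2 g by auto
    then obtain y where y: "y \<in> carrier G" "(\<psi>^^n) g = (\<psi>^^n) ((\<psi>^^n) y)"
      by (auto simp: funpow_add)
    define i where "i = (\<psi>^^n) y"
    have i: "i \<in> I" "i \<in> carrier G" using y powc by (auto simp: i_def I_def)
    have "(\<psi>^^n) (g \<otimes> inv i) = \<one>"
      using g i y group_hom.hom_mult[OF gh] group_hom.hom_inv[OF gh] powc[OF i(2), of n] by (simp add: i_def)
    then have "g \<otimes> inv i \<in> J" using g i by (simp add: memJ)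
    moreover have "g = (g \<otimes> inv i) \<otimes> i" using g i by (simp add: m_assoc)
    ultimately show ?thesis using i by blast
  qed
  have P8: "semidirect_of G J I"
    unfolding semidirect_of_def
  proof (intro conjI JG IG JI)
    show "J <#> I = carrier G"
    proof
      show "J <#> I \<subseteq> carrier G" using Jc Ic by (auto simp: set_mult_def)
      show "carrier G \<subseteq> J <#> I" using decomp by (auto simp: set_mult_def)
    qed
  qed
  have P9: "semidirect_of C J I"
    unfolding semidirect_of_def
  proof (intro conjI JC IC)
    show "J \<inter> I = {\<one>\<^bsub>C\<^esub>}" using JI by simp
    show "J <#>\<^bsub>C\<^esub> I = carrier C"
    proof
      show "J <#>\<^bsub>C\<^esub> I \<subseteq> carrier C" using Jc Ic by (auto simp: set_mult_def intro!: circ_closed)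
      show "carrier C \<subseteq> J <#>\<^bsub>C\<^esub> I"
      proof
        fix g assume "g \<in> carrier C"
        then have g: "g \<in> carrier G" by simp
        obtain j i where j: "j \<in> J" and i: "i \<in> I" and gji: "g = j \<otimes> i" using decomp[OF g] by blast
        have jc: "j \<in> carrier G" and ic: "i \<in> carrier G" using j i Jc Ic by auto
        have nJ: "\<forall>x\<in>carrier G. \<forall>h\<in>J. x \<otimes> h \<otimes> inv x \<in> J" using JG normal_inv_iff by blast
        have "inv i \<otimes> j \<otimes> inv (inv i) \<in> J" using nJ ic j inv_closed by blast
        then have t1: "inv i \<otimes> j \<otimes> i \<in> J" using ic by simp
        define j2 where "j2 = inv (E i) \<otimes> (inv i \<otimes> j \<otimes> i) \<otimes> inv (inv (E i))"
        have j2: "j2 \<in> J" using nJ ic t1 inv_closed E_closed unfolding j2_def by blast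
        have j2c: "j2 \<in> carrier G" using j2 Jc by auto
        have gi: "g = i \<circ>\<circ> j2" using gji ic jc by (simp add: circ_eq j2_def m_assoc)
        have cinvi: "inv\<^bsub>C\<^esub> i = cinv i"
          using ic by (intro group.inv_equality[OF group_C]) auto
        define j3 where "j3 = i \<circ>\<circ> j2 \<circ>\<circ> cinv i"
        have j3: "j3 \<in> J" using JC ic j2 unfolding group.normal_inv_iff[OF group_C] j3_def
          by (auto simp: cinvi)
        have "j3 \<circ>\<circ> i = g" using ic j2c gi by (simp add: j3_def circ_assoc)
        then show "g \<in> J <#>\<^bsub>C\<^esub> I" using j3 i by (auto simp: set_mult_def)
      qed
    qed
  qed
  have P10: "semidirect_of NG (\<nu> ` J) (\<nu> ` I)"
    by (rule semidirect_transfer[OF group_C group_NG hom_nu bij_nu P9])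
  show ?thesis
    by (rule exI[of _ n]) (simp add: Let_def J_def[symmetric] I_def[symmetric] JG JC IG IC P5 P6 P7 P8 P9 P10)
qed

end

theorem mainTheorem5:
  fixes G :: "('a, 'b) monoid_scheme" and \<psi> :: "'a \<Rightarrow> 'a" and \<epsilon> :: int
  assumes "group G"
    and "dcc_subgroups G" and "acc_normal_subgroups G"
    and "\<psi> \<in> hom G G"
    and "(\<epsilon> = -1 \<and> \<psi> ` comm_subgroup G (psi_comm G \<psi>) (carrier G) \<subseteq> grp_center G)
       \<or> (\<epsilon> = 1 \<and> \<psi> ` comm_subgroup G (\<psi> ` carrier G) (carrier G) \<subseteq> grp_center G)"
  shows "\<exists>n::nat.
    (let J = kernel G G (\<psi> ^^ n); I = (\<psi> ^^ n) ` carrier G; C = circ_group G \<psi> \<epsilon> in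
      J \<lhd> G \<and> J \<lhd> C
    \<and> subgroup I G \<and> subgroup I C
    \<and> \<psi> \<in> hom (G\<lparr>carrier := J\<rparr>) (G\<lparr>carrier := J\<rparr>) \<and> (\<exists>m. \<forall>x\<in>J. (\<psi> ^^ m) x = \<one>\<^bsub>G\<^esub>)
    \<and> \<psi> \<in> iso (G\<lparr>carrier := I\<rparr>) (G\<lparr>carrier := I\<rparr>)
    \<and> semidirect_of G J I \<and> semidirect_of C J I
    \<and> semidirect_of (nu_group G \<psi> \<epsilon>) (nu G \<psi> \<epsilon> ` J) (nu G \<psi> \<epsilon> ` I))"
proof -
  interpret psi_setup G \<psi> \<epsilon> using assms by (simp add: psi_setup_def psi_setup_axioms_def)
  show ?thesis using main_loc assms(2,3) by blast
qed

end
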